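(* Let $\mathbf x_1,\dots,\mathbf x_n\in\mathbb R^d$ be distinct points, let $f\colon(0,\infty)\to\mathbb R$ be differentiable, and let $J\colon\mathbb R^n\to\mathbb R$ be a symmetric function that is differentiable at $\lambda(L^{\mathbf x})$. Let $U\in O(n)$ be any orthogonal matrix, with columns $u_1,\dots,u_n$, satisfying $L^{\mathbf x}=U\,\mathrm{diag}(\lambda(L^{\mathbf x}))\,U^t$, and let $V=U\,\mathrm{diag}(\nabla J(\lambda))\,U^t$ with $\lambda=\lambda(L^{\mathbf x})$. Then the gradient of $\mathbf x\mapsto J(\lambda(L^{\mathbf x}))$ with respect to $\mathbf x_i$ is $$\nabla_{\mathbf x_i}\big(J\circ\lambda\circ L^{\mathbf x}\big)=2\sum_{k\ne i}\big(V_{kk}-2V_{ik}+V_{ii}\big)\, f'\big(|\mathbf x_i-\mathbf x_k|^2\big)\,(\mathbf x_i-\mathbf x_k).$$ Equivalently, $$\nabla_{\mathbf x_i}\big(J\circ\lambda\circ L^{\mathbf x}\big)=2\sum_{\text{edges }k=\{i,j\}} g_k\, f'\big(|\mathbf x_i-\mathbf x_j|^2\big)\,(\mathbf x_i-\mathbf x_j),$$ where $g\in\mathbb R^{\binom n2}$ is given by $g=\sum_{j=1}^n (Bu_j)^2\,(\nabla J(\lambda))_j$, with the square taken entrywise.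
   Context: $W^{\mathbf x}$ is the $n\times n$ symmetric matrix with $W^{\mathbf x}_{ij}=f(|\mathbf x_i-\mathbf x_j|^2)$ for $i\ne j$ and $W^{\mathbf x}_{ii}=0$; $D^{\mathbf x}$ is diagonal with $D^{\mathbf x}_{ii}=\sum_jW^{\mathbf x}_{ij}$; and $L^{\mathbf x}=D^{\mathbf x}-W^{\mathbf x}$. For a real symmetric matrix $A$, $\lambda(A)\in\mathbb R^n$ denotes its eigenvalues in non-decreasing order. $J$ is symmetric if $J(x)$ is invariant under permutations of the components of $x$. $B\in\mathbb R^{\binom n2\times n}$ is the arc–vertex incidence matrix of the complete graph on $[n]$ with each edge $k=\{i,j\}$, $i>j$, oriented so that $B_{k,i}=1$, $B_{k,j}=-1$, and $B_{k,l}=0$ otherwise; thus $L^{\mathbf x}=B^t\,\mathrm{diag}(w^{\mathbf x})\,B$ with $w^{\mathbf x}_k=f(|\mathbf x_i-\mathbf x_j|^2)$ for $k=\{i,j\}$. *)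

theory Defs
  imports "HOL-Analysis.Analysis" "HOL-Computational_Algebra.Polynomial"
begin

definition weight_mat :: "(real \<Rightarrow> real) \<Rightarrow> ('n::finite \<Rightarrow> real^'d) \<Rightarrow> real^'n^'n" where
  "weight_mat f x = (\<chi> i j. if i = j then 0 else f ((norm (x i - x j))\<^sup>2))"

definition degree_mat :: "(real \<Rightarrow> real) \<Rightarrow> ('n::finite \<Rightarrow> real^'d) \<Rightarrow> real^'n^'n" where
  "degree_mat f x = (\<chi> i j. if i = j then (\<Sum>k\<in>UNIV. weight_mat f x $ i $ k) else 0)"

definition laplacian :: "(real \<Rightarrow> real) \<Rightarrow> ('n::finite \<Rightarrow> real^'d) \<Rightarrow> real^'n^'n" where
  "laplacian f x = degree_mat f x - weight_mat f x"

definition diag_mat :: "real^'n \<Rightarrow> real^'n^'n" where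
  "diag_mat l = (\<chi> i j. if i = j then l $ i else 0)"

definition char_poly_mat :: "real^'n::finite^'n \<Rightarrow> real poly" where
  "char_poly_mat A = det (\<chi> i j. (if i = j then [:0, 1:] else 0) - [:A $ i $ j:])"

definition sorted_eigenvalues :: "real^('n::{finite,linorder})^('n::{finite,linorder}) \<Rightarrow> real^('n::{finite,linorder})" where
  "sorted_eigenvalues A = (THE l. (\<forall>i j. i \<le> j \<longrightarrow> l $ i \<le> l $ j) \<and>
       char_poly_mat A = (\<Prod>i\<in>UNIV. [:- (l $ i), 1:]))"

definition symmetric_fun :: "(real^'n \<Rightarrow> real) \<Rightarrow> bool" where
  "symmetric_fun J \<longleftrightarrow> (\<forall>p v. p permutes (UNIV::'n set) \<longrightarrow> J (\<chi> i. v $ p i) = J v)"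

text \<open>Arc-vertex incidence matrix of the complete graph: edges are 2-element
  subsets e of 'n, oriented from Min e to Max e (B e (Max e) = 1, B e (Min e) = -1).\<close>
definition incidence :: "'n::{finite,linorder} set \<Rightarrow> 'n \<Rightarrow> real" where
  "incidence e l = (if l = Max e then 1 else if l = Min e then -1 else 0)"

end

theory Submission
  imports Defs
begin


lemma sym_inner: fixes M :: "real^'n^'n" assumes "transpose M = M"
  shows "(M *v x) \<bullet> y = x \<bullet> (M *v y)"
  by (metis assms dot_lmul_matrix vector_transpose_matrix)

lemma quad_neg: fixes a k :: real assumes "\<And>t. t > 0 \<Longrightarrow> 2*t*a \<le> t^2 * k" and "a \<ge> 0"
  shows "a = 0"
proof (rule ccontr)
  assume "a \<noteq> 0" hence a: "a > 0" using assms by simp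
  define t where "t = a / (\<bar>k\<bar> + 1)"
  have t: "t > 0" using a by (simp add: t_def add_pos_nonneg)
  have "2*t*a \<le> t^2 * k" using assms(1) t by blast
  hence "2*a \<le> t*k" using t by (simp add: power2_eq_square mult.assoc)
  also have "t*k \<le> t*\<bar>k\<bar>" using t by (simp add: mult_left_mono)
  also have "t*\<bar>k\<bar> < a" using a by (simp add: t_def field_simps)
  finally show False using a by simp
qed

lemma spectral_subspace:
  fixes M :: "real^'n^'n"
  assumes symM: "transpose M = M"
  shows "subspace S \<Longrightarrow> (\<forall>x\<in>S. M *v x \<in> S) \<Longrightarrow>
    \<exists>B. B \<subseteq> S \<and> pairwise orthogonal B \<and> (\<forall>v\<in>B. norm v = 1 \<and> (\<exists>c. M *v v = c *\<^sub>R v)) \<and> span B = S"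
proof (induction "dim S" arbitrary: S rule: less_induct)
  case less
  show ?case
  proof (cases "S = {0}")
    case True thus ?thesis by (intro exI[of _ "{}"]) auto
  next
    case False
    then obtain x0 where x0: "x0 \<in> S" "x0 \<noteq> 0" using less.prems(1) subspace_0 by blast
    let ?K = "S \<inter> sphere 0 1"
    let ?q = "\<lambda>v. v \<bullet> (M *v v)"
    have "compact ?K" by (metis Int_commute closed_subspace compact_Int_closed compact_sphere less.prems(1))
    moreover have "?K \<noteq> {}"
    proof -
      have "(1/norm x0) *\<^sub>R x0 \<in> ?K" using x0 less.prems(1) by (simp add: subspace_mul)
      thus ?thesis by blast
    qed
    moreover have "continuous_on ?K ?q"
      by (intro continuous_intros linear_continuous_on) (simp add: matrix_vector_mul_bounded_linear)
    ultimately obtain v where v: "v \<in> ?K" and vmax: "\<And>u. u \<in> ?K \<Longrightarrow> ?q u \<le> ?q v"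
      using continuous_attains_sup[of ?K ?q] by blast
    define c where "c = ?q v"
    have vS: "v \<in> S" and nv: "norm v = 1" using v by auto
    have vv: "v \<bullet> v = 1" using nv by (simp add: norm_eq_1)
    have qle: "?q u \<le> c * (u \<bullet> u)" if "u \<in> S" for u
    proof (cases "u = 0")
      case True thus ?thesis by simp
    next
      case False
      have "(1/norm u) *\<^sub>R u \<in> ?K" using that False less.prems(1) by (simp add: subspace_mul)
      hence "?q ((1/norm u) *\<^sub>R u) \<le> c" using vmax c_def by blast
      hence "(1/norm u)^2 * ?q u \<le> c"
        by (simp add: matrix_vector_mult_scaleR power2_eq_square mult.assoc)
      moreover have "u \<bullet> u = (norm u)^2" by (simp add: power2_norm_eq_inner)
      moreover have "norm u > 0" using False by simp
      ultimately show ?thesis by (simp add: field_simps)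
    qed
    define w where "w = M *v v - c *\<^sub>R v"
    have wS: "w \<in> S" unfolding w_def using less.prems vS by (simp add: subspace_diff subspace_mul)
    have Mvw: "(M *v v) \<bullet> w = w \<bullet> w"
      unfolding w_def by (simp add: inner_diff_left inner_diff_right c_def vv inner_commute)
    have Mwv: "(M *v w) \<bullet> v = w \<bullet> w"
      using Mvw sym_inner[OF symM, of w v] sym_inner[OF symM, of v w] by (simp add: inner_commute)
    have wv: "w \<bullet> v = 0" unfolding w_def by (simp add: inner_diff_left c_def vv inner_commute inner_diff_right)
    have "w \<bullet> w = 0"
    proof (rule quad_neg)
      fix t :: real assume "t > 0"
      have h1: "?q (v + t *\<^sub>R w) \<le> c * ((v + t *\<^sub>R w) \<bullet> (v + t *\<^sub>R w))"
        using qle less.prems(1) vS wS by (simp add: subspace_add subspace_mul)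
      have h2: "?q (v + t *\<^sub>R w) = c + 2*t*(w \<bullet> w) + t^2 * ?q w"
        using Mvw Mwv by (simp add: matrix_vector_right_distrib matrix_vector_mult_scaleR
            inner_add_left inner_add_right c_def power2_eq_square inner_commute algebra_simps)
      have h3: "(v + t *\<^sub>R w) \<bullet> (v + t *\<^sub>R w) = 1 + t^2 * (w \<bullet> w)"
        using wv vv by (simp add: inner_add_left inner_add_right power2_eq_square inner_commute algebra_simps)
      have "c + 2*t*(w \<bullet> w) + t^2 * ?q w \<le> c * (1 + t^2 * (w \<bullet> w))"
        using h1 unfolding h2 h3 .
      hence "2*t*(w \<bullet> w) \<le> t^2 * (c*(w \<bullet> w) - ?q w)" by (simp add: algebra_simps)
      thus "2*t*(w \<bullet> w) \<le> t^2 * (c*(w \<bullet> w) - ?q w)" .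
    qed simp
    hence Mv: "M *v v = c *\<^sub>R v" unfolding w_def by simp
    define S' where "S' = {u\<in>S. u \<bullet> v = 0}"
    have subS': "subspace S'" unfolding S'_def using less.prems(1)
      by (auto simp: subspace_def inner_add_left)
    have invS': "\<forall>x\<in>S'. M *v x \<in> S'"
      using less.prems(2) unfolding S'_def by (auto simp: sym_inner[OF symM] Mv)
    have "span S' \<subset> span S"
    proof -
      have "S' \<subseteq> S" unfolding S'_def by auto
      moreover have "v \<in> S" "v \<notin> S'" using vS vv unfolding S'_def by auto
      moreover have e1: "span S' = S'" using subS' by (simp add: span_eq_iff)
      moreover have e2: "span S = S" using less.prems(1) by (simp add: span_eq_iff)
      ultimately show ?thesis by (metis psubsetI)
    qed
    hence "dim S' < dim S" by (rule dim_psubset)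
    then obtain B' where B': "B' \<subseteq> S'" "pairwise orthogonal B'"
      "\<forall>u\<in>B'. norm u = 1 \<and> (\<exists>c. M *v u = c *\<^sub>R u)" "span B' = S'"
      using less.hyps[OF _ subS' invS'] by blast
    show ?thesis
    proof (intro exI[of _ "insert v B'"] conjI)
      show "insert v B' \<subseteq> S" using B'(1) vS unfolding S'_def by auto
      show "pairwise orthogonal (insert v B')"
        using B'(1,2) unfolding pairwise_insert S'_def orthogonal_def by (auto simp: inner_commute)
      show "\<forall>u\<in>insert v B'. norm u = 1 \<and> (\<exists>c. M *v u = c *\<^sub>R u)" using B'(3) nv Mv by auto
      show "span (insert v B') = S"
      proof
        show "span (insert v B') \<subseteq> S"
          using \<open>insert v B' \<subseteq> S\<close> less.prems(1) by (simp add: span_minimal)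
        show "S \<subseteq> span (insert v B')"
        proof
          fix x assume xS: "x \<in> S"
          have "x - (x \<bullet> v) *\<^sub>R v \<in> S'" unfolding S'_def using xS vS less.prems(1) vv
            by (simp add: subspace_diff subspace_mul inner_diff_left)
          hence "x - (x \<bullet> v) *\<^sub>R v \<in> span (insert v B')" using B'(4) by (metis span_mono subset_insertI subsetD)
          moreover have "(x \<bullet> v) *\<^sub>R v \<in> span (insert v B')" by (simp add: span_base span_mul)
          ultimately have "(x - (x \<bullet> v) *\<^sub>R v) + (x \<bullet> v) *\<^sub>R v \<in> span (insert v B')" by (rule span_add)
          thus "x \<in> span (insert v B')" by simp
        qed
      qed
    qed
  qed
qed


lemma sort_perm:
  fixes \<nu> :: "'n::{finite,linorder} \<Rightarrow> real"
  obtains p where "p permutes UNIV" "\<And>i j. i \<le> j \<Longrightarrow> \<nu> (p i) \<le> \<nu> (p j)"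
proof -
  define r where "r i = real (card {j. j < i})" for i :: 'n
  have rmono: "r i < r j" if "i < j" for i j
  proof -
    have "{k. k < i} \<subset> {k. k < j}" using that by auto
    hence "card {k. k < i} < card {k. k < j}" by (simp add: psubset_card_mono)
    thus ?thesis by (simp add: r_def)
  qed
  define F where "F p = (\<Sum>k\<in>UNIV. r k * \<nu> (p k))" for p :: "'n \<Rightarrow> 'n"
  let ?P = "{p. p permutes (UNIV::'n set)}"
  have fin: "finite (F ` ?P)" by (simp add: finite_permutations)
  moreover have "F ` ?P \<noteq> {}" using permutes_id by blast
  ultimately have "Max (F ` ?P) \<in> F ` ?P" by (rule Max_in)
  then obtain p where pP: "p \<in> ?P" and pm: "F p = Max (F ` ?P)" by auto
  have pmax: "F q \<le> F p" if "q \<in> ?P" for q using Max_ge[OF fin] that pm by auto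
  show ?thesis
  proof (rule that[of p])
    show "p permutes UNIV" using pP by simp
    fix i j :: 'n assume ij: "i \<le> j"
    show "\<nu> (p i) \<le> \<nu> (p j)"
    proof (rule ccontr)
      assume neg: "\<not> \<nu> (p i) \<le> \<nu> (p j)"
      hence "i \<noteq> j" by auto
      hence ilj: "i < j" using ij by simp
      define q where "q = p \<circ> Transposition.transpose i j"
      have "q permutes UNIV" unfolding q_def using pP
        by (simp add: permutes_compose permutes_swap_id)
      hence "F q \<le> F p" using pmax by simp
      moreover have "F q = F p + (r j - r i) * (\<nu> (p i) - \<nu> (p j))"
      proof -
        have "\<And>k. r k * \<nu> (q k) = r k * \<nu> (p k) + (if k = i then r i * (\<nu> (p j) - \<nu> (p i)) else 0)
             + (if k = j then r j * (\<nu> (p i) - \<nu> (p j)) else 0)"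
          using \<open>i \<noteq> j\<close> by (auto simp: q_def algebra_simps)
        hence "F q = (\<Sum>k\<in>UNIV. r k * \<nu> (p k) + (if k = i then r i * (\<nu> (p j) - \<nu> (p i)) else 0)
             + (if k = j then r j * (\<nu> (p i) - \<nu> (p j)) else 0))" unfolding F_def by simp
        also have "\<dots> = F p + r i * (\<nu> (p j) - \<nu> (p i)) + r j * (\<nu> (p i) - \<nu> (p j))"
          unfolding F_def by (simp add: sum.distrib)
        finally show ?thesis by (simp add: algebra_simps)
      qed
      moreover have "(r j - r i) * (\<nu> (p i) - \<nu> (p j)) > 0" using rmono[OF ilj] neg by simp
      ultimately show False by simp
    qed
  qed
qed

lemma spectral_decomp:
  fixes M :: "real^('n::{finite,linorder})^('n::{finite,linorder})"
  assumes symM: "transpose M = M"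
  obtains W \<mu> where "orthogonal_matrix W" "\<And>i j. i \<le> j \<Longrightarrow> \<mu>$i \<le> \<mu>$j"
    "M = W ** diag_mat \<mu> ** transpose W"
proof -
  obtain B where B: "pairwise orthogonal B" "\<forall>v\<in>B. norm v = 1 \<and> (\<exists>c. M *v v = c *\<^sub>R v)"
    "span B = UNIV"
    using spectral_subspace[OF symM, of UNIV] by auto
  have indep: "independent B" using B(1,2) by (intro pairwise_orthogonal_independent) auto
  have finB: "finite B" using indep by (rule finiteI_independent)
  have "card B = dim (UNIV :: (real^('n::{finite,linorder})) set)" using basis_card_eq_dim[of B UNIV] indep B(3) by auto
  hence cB: "card B = CARD(('n::{finite,linorder}))" by simp
  obtain e0 where e0: "bij_betw e0 (UNIV::('n::{finite,linorder}) set) B"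
    using finite_same_card_bij[of "UNIV::('n::{finite,linorder}) set" B] finB cB by auto
  define \<nu> where "\<nu> k = (SOME c. M *v e0 k = c *\<^sub>R e0 k)" for k
  have e0B: "e0 k \<in> B" for k using e0 by (auto simp: bij_betw_def)
  have eig: "M *v e0 k = \<nu> k *\<^sub>R e0 k" for k
    unfolding \<nu>_def using B(2) e0B[of k] by (metis (mono_tags, lifting) someI_ex)
  obtain p where p: "p permutes UNIV" "\<And>i j. i \<le> j \<Longrightarrow> \<nu> (p i) \<le> \<nu> (p j)"
    using sort_perm[of \<nu>] by blast
  define W :: "real^('n::{finite,linorder})^('n::{finite,linorder})" where "W = (\<chi> r k. e0 (p k) $ r)"
  define \<mu> :: "real^('n::{finite,linorder})" where "\<mu> = (\<chi> k. \<nu> (p k))"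
  have colW: "column k W = e0 (p k)" for k by (simp add: W_def column_def vec_eq_iff)
  have injp: "inj p" using p(1) by (simp add: permutes_inj)
  have inj0: "inj e0" using e0 by (simp add: bij_betw_def)
  have oW: "orthogonal_matrix W"
    unfolding orthogonal_matrix_orthonormal_columns colW
  proof (intro conjI allI impI)
    fix i show "norm (e0 (p i)) = 1" using B(2) e0B by blast
  next
    fix i j :: "'n::{finite,linorder}" assume "i \<noteq> j"
    hence "e0 (p i) \<noteq> e0 (p j)" using injp inj0 by (meson injD)
    thus "orthogonal (e0 (p i)) (e0 (p j))" using B(1) e0B by (meson pairwiseD)
  qed
  have MW: "M ** W = W ** diag_mat \<mu>"
  proof -
    have "(M ** W) $ r $ k = (W ** diag_mat \<mu>) $ r $ k" for r k
    proof -
      have "(M ** W) $ r $ k = (M *v e0 (p k)) $ r"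
        by (simp add: matrix_matrix_mult_def matrix_vector_mult_def W_def)
      also have "\<dots> = \<nu> (p k) * e0 (p k) $ r" using eig by simp
      also have "\<dots> = (W ** diag_mat \<mu>) $ r $ k"
        by (simp add: matrix_matrix_mult_def diag_mat_def W_def \<mu>_def if_distrib[of "\<lambda>x. _ * x"] cong: if_cong)
      finally show ?thesis .
    qed
    thus ?thesis by (simp add: vec_eq_iff)
  qed
  have "M = M ** (W ** transpose W)" using oW by (simp add: orthogonal_matrix_def)
  also have "\<dots> = W ** diag_mat \<mu> ** transpose W" by (metis matrix_mul_assoc MW)
  finally have "M = W ** diag_mat \<mu> ** transpose W" .
  moreover have "\<mu>$i \<le> \<mu>$j" if "i \<le> j" for i j using p(2) that by (simp add: \<mu>_def)
  ultimately show ?thesis using that oW by blast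
qed


lemma const_poly_add: "[:a + b:] = [:a:] + [:b::'a::comm_ring_1:]"
  by simp

lemma const_poly_sum: "[:sum (g::_\<Rightarrow>real) A:] = (\<Sum>a\<in>A. [:g a:])"
  by (induct A rule: infinite_finite_induct) (simp_all add: const_poly_add)

lemma const_poly_mult: "[:a * b:] = [:a:] * ([:b:] :: 'a::comm_ring_1 poly)"
  by simp

definition cmat :: "real^'n^'m \<Rightarrow> real poly^'n^'m" where
  "cmat X = (\<chi> i j. [:X$i$j:])"

lemma cmat_mult: "cmat (X ** Y) = cmat X ** cmat Y"
  by (simp add: cmat_def matrix_matrix_mult_def vec_eq_iff const_poly_sum mult.commute)

lemma cmat_transpose: "cmat (transpose X) = transpose (cmat X)"
  by (simp add: cmat_def transpose_def vec_eq_iff)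

lemma cmat_one: "cmat (mat 1) = mat 1"
  by (simp add: cmat_def mat_def vec_eq_iff)

lemma matrix_sub_ldistrib': "(A::'a::comm_ring_1^'n^'m) ** (B - C) = A ** B - A ** (C::'a^'k^'n)"
  by (simp add: matrix_matrix_mult_def vec_eq_iff sum_subtractf algebra_simps)

lemma matrix_sub_rdistrib': "((B - C)::'a::comm_ring_1^'n^'m) ** (A::'a^'k^'n) = B ** A - C ** A"
  by (simp add: matrix_matrix_mult_def vec_eq_iff sum_subtractf algebra_simps)

definition xmat :: "real poly^'n^'n" where
  "xmat = (\<chi> i j. if i = j then [:0,1:] else 0)"

lemma xmat_comm: "xmat ** A = A ** xmat"
  by (simp add: xmat_def matrix_matrix_mult_def vec_eq_iff if_distrib[of "\<lambda>x. x * _"]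
      if_distrib[of "\<lambda>x. _ * x"] mult.commute cong: if_cong)

lemma char_poly_orth:
  fixes W :: "real^'n^'n"
  assumes oW: "orthogonal_matrix W"
  shows "char_poly_mat (W ** diag_mat \<mu> ** transpose W) = (\<Prod>i\<in>UNIV. [:- (\<mu> $ i), 1:])"
proof -
  let ?C = "cmat W"
  have CC: "?C ** transpose ?C = mat 1" using oW
    by (metis cmat_mult cmat_one cmat_transpose orthogonal_matrix_def)
  have CCt: "transpose ?C ** ?C = mat 1" using oW
    by (metis cmat_mult cmat_one cmat_transpose orthogonal_matrix_def)
  have cm: "(\<chi> i j. (if i = j then [:0, 1:] else 0) - [:X $ i $ j:]) = xmat - cmat X" for X :: "real^'n^'n"
    by (simp add: xmat_def cmat_def vec_eq_iff)
  have "xmat = ?C ** xmat ** transpose ?C"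
    by (metis CC matrix_mul_assoc matrix_mul_rid xmat_comm)
  hence "xmat - cmat (W ** diag_mat \<mu> ** transpose W) =
      ?C ** (xmat - cmat (diag_mat \<mu>)) ** transpose ?C"
    by (simp add: cmat_mult cmat_transpose matrix_sub_ldistrib' matrix_sub_rdistrib')
  hence "char_poly_mat (W ** diag_mat \<mu> ** transpose W) = det (?C ** (xmat - cmat (diag_mat \<mu>)) ** transpose ?C)"
    unfolding char_poly_mat_def cm by simp
  also have "\<dots> = det (xmat - cmat (diag_mat \<mu>)) * det (?C ** transpose ?C)"
    by (simp add: det_mul)
  also have "\<dots> = det (xmat - cmat (diag_mat \<mu>))" using CC by simp
  also have "\<dots> = (\<Prod>i\<in>UNIV. [:- (\<mu> $ i), 1:])"
    by (subst det_diagonal) (simp_all add: xmat_def cmat_def diag_mat_def)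
  finally show ?thesis .
qed

lemma order_prod_lin:
  "finite A \<Longrightarrow> order a (\<Prod>i\<in>A. [:- (l i), 1:]) = card {i\<in>A. l i = (a::real)}"
proof (induct A rule: finite_induct)
  case empty thus ?case by simp
next
  case (insert x A)
  let ?R = "\<Prod>i\<in>A. [:- (l i), 1:]"
  have f0: "\<And>i. [:- l i, 1:] \<noteq> (0::real poly)" by simp
  have Rnz: "?R \<noteq> 0"
  proof
    assume "?R = 0"
    hence "\<exists>i\<in>A. [:- l i, 1:] = (0::real poly)" by (simp only: prod_zero_iff[OF insert(1)])
    thus False using f0 by blast
  qed
  have nz: "[:- (l x), 1:] * ?R \<noteq> 0" using Rnz f0[of x] by (simp only: mult_eq_0_iff) blast
  have pe: "(\<Prod>i\<in>insert x A. [:- (l i), 1:]) = [:- (l x), 1:] * ?R"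
    using insert(1,2) by (rule prod.insert)
  have o1: "order a [:- (l x), 1:] = (if l x = a then 1 else 0)"
  proof (cases "l x = a")
    case True thus ?thesis using order_power_n_n[of a 1] by simp
  next
    case False
    have "order a [:- (l x), 1:] = 0" by (rule order_0I) (use False in simp)
    thus ?thesis using False by simp
  qed
  have ce: "card {i\<in>insert x A. l i = a} = (if l x = a then 1 else 0) + card {i\<in>A. l i = a}"
  proof (cases "l x = a")
    case True
    hence "{i\<in>insert x A. l i = a} = insert x {i\<in>A. l i = a}" by auto
    moreover have "x \<notin> {i\<in>A. l i = a}" using insert(2) by simp
    ultimately show ?thesis using True insert(1) by simp
  next
    case False
    hence "{i\<in>insert x A. l i = a} = {i\<in>A. l i = a}" by auto
    thus ?thesis using False by simp
  qed
  show ?case unfolding pe order_mult[OF nz] o1 insert(3) ce ..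
qed

lemma sorted_unique:
  fixes l m :: "'n::{finite,linorder} \<Rightarrow> real"
  assumes sl: "\<And>i j. i \<le> j \<Longrightarrow> l i \<le> l j" and sm: "\<And>i j. i \<le> j \<Longrightarrow> m i \<le> m j"
    and cnt: "\<And>a. card {i. l i = a} = card {i. m i = a}"
  shows "l = m"
proof (rule ccontr)
  assume "l \<noteq> m"
  hence ne: "{i. l i \<noteq> m i} \<noteq> {}" by auto
  define i where "i = Min {i. l i \<noteq> m i}"
  have iD: "l i \<noteq> m i" using Min_in[OF _ ne] i_def by auto
  have below: "l j = m j" if "j < i" for j
  proof (rule ccontr)
    assume "l j \<noteq> m j"
    hence "i \<le> j" unfolding i_def by (intro Min_le) auto
    thus False using that by simp
  qed
  have key: "\<And>l m :: 'n \<Rightarrow> real. (\<And>i j. i \<le> j \<Longrightarrow> m i \<le> m j) \<Longrightarrow> (\<And>j. j < i \<Longrightarrow> l j = m j)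
      \<Longrightarrow> l i < m i \<Longrightarrow> card {j. m j = l i} < card {j. l j = l i}"
  proof -
    fix l m :: "'n \<Rightarrow> real"
    assume sm: "\<And>i j. i \<le> j \<Longrightarrow> m i \<le> m j" and bl: "\<And>j. j < i \<Longrightarrow> l j = m j" and lt: "l i < m i"
    have "{j. m j = l i} \<subseteq> {j. j < i \<and> l j = l i}"
    proof
      fix j assume "j \<in> {j. m j = l i}"
      hence mj: "m j = l i" by simp
      have "j < i"
      proof (rule ccontr)
        assume "\<not> j < i" hence "i \<le> j" by simp
        hence "m i \<le> m j" by (rule sm)
        thus False using mj lt by simp
      qed
      thus "j \<in> {j. j < i \<and> l j = l i}" using bl mj by auto
    qed
    also have "\<dots> \<subset> {j. l j = l i}" by auto
    finally show "card {j. m j = l i} < card {j. l j = l i}" by (simp add: psubset_card_mono)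
  qed
  show False
  proof (cases "l i < m i")
    case True
    from key[of m l, OF sm below True] cnt show False by simp
  next
    case False
    hence "m i < l i" using iD by simp
    from key[of l m, OF sl _ this] below cnt show False by (metis less_irrefl)
  qed
qed

lemma sorted_eig_decomp:
  fixes W :: "real^('n::{finite,linorder})^('n::{finite,linorder})"
  assumes oW: "orthogonal_matrix W" and sm: "\<And>i j. i \<le> j \<Longrightarrow> \<mu>$i \<le> \<mu>$j"
  shows "sorted_eigenvalues (W ** diag_mat \<mu> ** transpose W) = \<mu>"
  unfolding sorted_eigenvalues_def
proof (rule the_equality)
  show "(\<forall>i j. i \<le> j \<longrightarrow> \<mu> $ i \<le> \<mu> $ j) \<and>
    char_poly_mat (W ** diag_mat \<mu> ** transpose W) = (\<Prod>i\<in>UNIV. [:- \<mu> $ i, 1:])"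
    using sm char_poly_orth[OF oW] by simp
next
  fix l :: "real^('n::{finite,linorder})"
  assume a: "(\<forall>i j. i \<le> j \<longrightarrow> l $ i \<le> l $ j) \<and>
    char_poly_mat (W ** diag_mat \<mu> ** transpose W) = (\<Prod>i\<in>UNIV. [:- l $ i, 1:])"
  hence eq: "(\<Prod>i\<in>UNIV. [:- l $ i, 1:]) = (\<Prod>i\<in>UNIV. [:- \<mu> $ i, 1:])"
    using char_poly_orth[OF oW] by simp
  have "card {i. l$i = a} = card {i. \<mu>$i = a}" for a
    using order_prod_lin[of UNIV a "\<lambda>i. l$i"] order_prod_lin[of UNIV a "\<lambda>i. \<mu>$i"] eq by simp
  hence "(\<lambda>i. l$i) = (\<lambda>i. \<mu>$i)" using a sm by (intro sorted_unique) auto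
  thus "l = \<mu>" by (simp add: vec_eq_iff fun_eq_iff)
qed


lemma norm_sq_mat: "(norm (X::real^'n^'m))^2 = (\<Sum>i\<in>UNIV. \<Sum>j\<in>UNIV. (X$i$j)^2)"
  unfolding power2_norm_eq_inner by (simp add: inner_vec_def power2_eq_square)

lemma inner_mat: "(X::real^'n^'m) \<bullet> Y = (\<Sum>i\<in>UNIV. \<Sum>j\<in>UNIV. X$i$j * Y$i$j)"
  by (simp add: inner_vec_def)

lemma orth_norm_vec:
  fixes Q :: "real^'n^'n" assumes "orthogonal_matrix Q"
  shows "norm (Q *v x) = norm x"
proof -
  have "(Q *v x) \<bullet> (Q *v x) = x \<bullet> x"
    by (metis assms dot_lmul_matrix matrix_vector_mul_assoc matrix_vector_mul_lid
        orthogonal_matrix_def vector_transpose_matrix)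
  thus ?thesis by (metis norm_eq_sqrt_inner)
qed

lemma norm_mult_orth_right:
  fixes X :: "real^'n^'m" and W :: "real^'n^'n"
  assumes "orthogonal_matrix W"
  shows "norm (X ** W) = norm X"
proof -
  have row: "(X ** W) $ i = transpose W *v (X $ i)" for i
    by (simp add: vec_eq_iff matrix_matrix_mult_def matrix_vector_mult_def transpose_def mult.commute)
  have "norm ((X ** W) $ i) = norm (X $ i)" for i
    unfolding row using assms orth_norm_vec[of "transpose W" "X $ i"] by simp
  thus ?thesis by (simp add: norm_vec_def)
qed

lemma norm_transpose_mat: "norm (transpose (X::real^'n^'m)) = norm X"
proof -
  have "(norm (transpose X))^2 = (norm X)^2"
    unfolding norm_sq_mat by (simp add: transpose_def) (rule sum.swap)
  thus ?thesis by (simp add: power2_eq_iff_nonneg)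
qed

lemma norm_orth_sandwich:
  fixes H :: "real^'n^'n" and U W :: "real^'n^'n"
  assumes "orthogonal_matrix U" "orthogonal_matrix W"
  shows "norm (transpose U ** H ** W) = norm H"
proof -
  have "norm (transpose U ** H ** W) = norm (transpose U ** H)" using assms(2) by (rule norm_mult_orth_right)
  also have "\<dots> = norm (transpose (transpose H ** U))" by (simp add: matrix_transpose_mul)
  also have "\<dots> = norm (transpose H ** U)" by (rule norm_transpose_mat)
  also have "\<dots> = norm (transpose H)" using assms(1) by (rule norm_mult_orth_right)
  also have "\<dots> = norm H" by (rule norm_transpose_mat)
  finally show ?thesis .
qed

lemma matrix_add_rdistrib': "((B + C)::real^'n^'m) ** (A::real^'k^'n) = B ** A + C ** A"
  by (simp add: matrix_matrix_mult_def vec_eq_iff sum.distrib algebra_simps)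

lemma matrix_diff_rdistrib': "((B - C)::real^'n^'m) ** (A::real^'k^'n) = B ** A - C ** A"
  by (simp add: matrix_matrix_mult_def vec_eq_iff sum_subtractf algebra_simps)

lemma matrix_diff_ldistrib': "(A::real^'n^'m) ** (B - C) = A ** B - A ** (C::real^'k^'n)"
  by (simp add: matrix_matrix_mult_def vec_eq_iff sum_subtractf algebra_simps)

lemma inner_orth_sandwich:
  fixes X Y :: "real^'n^'n" and U W :: "real^'n^'n"
  assumes "orthogonal_matrix U" "orthogonal_matrix W"
  shows "(transpose U ** X ** W) \<bullet> (transpose U ** Y ** W) = X \<bullet> Y"
proof -
  let ?T = "\<lambda>X. transpose U ** X ** W"
  have pol: "a \<bullet> b = ((norm (a + b))^2 - (norm (a - b))^2) / 4" for a b :: "real^'n^'n"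
    by (simp add: power2_norm_eq_inner inner_add_left inner_add_right inner_diff_left inner_diff_right inner_commute)
  have "?T (X + Y) = ?T X + ?T Y" by (simp add: matrix_add_ldistrib matrix_add_rdistrib')
  moreover have "?T (X - Y) = ?T X - ?T Y" by (simp add: matrix_diff_ldistrib' matrix_diff_rdistrib')
  ultimately have "?T X \<bullet> ?T Y = ((norm (?T (X + Y)))^2 - (norm (?T (X - Y)))^2) / 4"
    by (simp only: pol[of "?T X"])
  also have "\<dots> = ((norm (X + Y))^2 - (norm (X - Y))^2) / 4" by (simp only: norm_orth_sandwich[OF assms])
  also have "\<dots> = X \<bullet> Y" by (simp only: pol[of X])
  finally show ?thesis .
qed

lemma diag_mult_left: "(diag_mat l ** X) $ a $ b = l$a * X$a$b"
  by (simp add: diag_mat_def matrix_matrix_mult_def if_distrib[of "\<lambda>x. x * _"] cong: if_cong)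

lemma diag_mult_right: "(X ** diag_mat l) $ a $ b = X$a$b * l$b"
  by (simp add: diag_mat_def matrix_matrix_mult_def if_distrib[of "\<lambda>x. _ * x"] cong: if_cong)

lemma orth_col_sum: assumes "orthogonal_matrix (P::real^'n^'n)" shows "(\<Sum>a\<in>UNIV. (P$a$b)^2) = 1"
proof -
  have "norm (column b P) = 1" using assms orthogonal_matrix_orthonormal_columns by blast
  hence "column b P \<bullet> column b P = 1" by (simp add: norm_eq_1)
  thus ?thesis by (simp add: inner_vec_def column_def power2_eq_square)
qed

lemma orth_row_sum: assumes "orthogonal_matrix (P::real^'n^'n)" shows "(\<Sum>b\<in>UNIV. (P$a$b)^2) = 1"
proof -
  have "norm (row a P) = 1" using assms orthogonal_matrix_orthonormal_rows by blast
  hence "row a P \<bullet> row a P = 1" by (simp add: norm_eq_1)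
  thus ?thesis by (simp add: inner_vec_def row_def power2_eq_square)
qed


lemma downset_eq:
  fixes D1 D2 :: "'n::{finite,linorder} set"
  assumes d1: "\<And>x y. x \<in> D1 \<Longrightarrow> y \<le> x \<Longrightarrow> y \<in> D1"
    and d2: "\<And>x y. x \<in> D2 \<Longrightarrow> y \<le> x \<Longrightarrow> y \<in> D2"
    and c: "card D1 = card D2"
  shows "D1 = D2"
proof -
  have "D1 \<subseteq> D2 \<or> D2 \<subseteq> D1"
  proof (rule ccontr)
    assume "\<not> (D1 \<subseteq> D2 \<or> D2 \<subseteq> D1)"
    then obtain x y where "x \<in> D1" "x \<notin> D2" "y \<in> D2" "y \<notin> D1" by auto
    thus False using d1 d2 by (metis linear)
  qed
  thus ?thesis using c by (metis card_subset_eq finite)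
qed

locale pert =
  fixes U W :: "real^('n::{finite,linorder})^('n::{finite,linorder})"
    and lam mu :: "real^('n::{finite,linorder})"
    and A M :: "real^('n::{finite,linorder})^('n::{finite,linorder})"
  assumes oU: "orthogonal_matrix U" and oW: "orthogonal_matrix W"
    and Adef: "A = U ** diag_mat lam ** transpose U"
    and Mdef: "M = W ** diag_mat mu ** transpose W"
begin

definition "P = transpose U ** W"
definition "Q = transpose U ** (M - A) ** W"

lemma oP: "orthogonal_matrix P"
  unfolding P_def using oU oW by (simp add: orthogonal_matrix_mul)

lemma UtU: "transpose U ** U = mat 1" using oU by (simp add: orthogonal_matrix_def)
lemma WtW: "transpose W ** W = mat 1" using oW by (simp add: orthogonal_matrix_def)

lemma Q_entry: "Q $ a $ b = (mu$b - lam$a) * P$a$b"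
proof -
  have "transpose U ** M ** W = P ** diag_mat mu"
    unfolding Mdef P_def by (metis WtW matrix_mul_assoc matrix_mul_rid)
  moreover have "transpose U ** A ** W = diag_mat lam ** P"
    unfolding Adef P_def by (metis UtU matrix_mul_assoc matrix_mul_lid)
  ultimately have "Q = P ** diag_mat mu - diag_mat lam ** P"
    unfolding Q_def by (simp add: matrix_diff_ldistrib' matrix_diff_rdistrib')
  hence "Q$a$b = (P ** diag_mat mu)$a$b - (diag_mat lam ** P)$a$b" by simp
  also have "\<dots> = P$a$b * mu$b - lam$a * P$a$b" by (simp only: diag_mult_left diag_mult_right)
  finally show ?thesis by (simp add: algebra_simps)
qed

lemma Q_total: "(\<Sum>a\<in>UNIV. \<Sum>b\<in>UNIV. (Q$a$b)^2) = (norm (M - A))^2"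
  using norm_sq_mat[of Q] norm_orth_sandwich[OF oU oW, of "M - A"] unfolding Q_def by simp

lemma Q_col: "(\<Sum>a\<in>UNIV. (Q$a$b)^2) \<le> (norm (M - A))^2"
proof -
  have "(\<Sum>a\<in>UNIV. (Q$a$b)^2) = (\<Sum>a\<in>UNIV. \<Sum>b'\<in>{b}. (Q$a$b')^2)" by simp
  also have "\<dots> \<le> (\<Sum>a\<in>UNIV. \<Sum>b'\<in>UNIV. (Q$a$b')^2)"
    by (intro sum_mono sum_mono2) auto
  finally show ?thesis using Q_total by simp
qed

lemma Q_entry_bound: "(Q$a$b)^2 \<le> (norm (M - A))^2"
proof -
  have "(Q$a$b)^2 = (\<Sum>a'\<in>{a}. (Q$a'$b)^2)" by simp
  also have "\<dots> \<le> (\<Sum>a'\<in>UNIV. (Q$a'$b)^2)" by (intro sum_mono2) auto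
  finally show ?thesis using Q_col[of b] by simp
qed

lemma weighted_bound:
  assumes r: "r > 0" and far: "\<And>a. a \<in> T \<Longrightarrow> r \<le> \<bar>mu$b - lam$a\<bar>"
  shows "(\<Sum>a\<in>T. (P$a$b)^2) \<le> (norm (M - A))^2 / r^2"
proof -
  have "r^2 * (\<Sum>a\<in>T. (P$a$b)^2) = (\<Sum>a\<in>T. r^2 * (P$a$b)^2)" by (simp add: sum_distrib_left)
  also have "\<dots> \<le> (\<Sum>a\<in>T. (Q$a$b)^2)"
  proof (rule sum_mono)
    fix a assume "a \<in> T"
    hence "r^2 \<le> (mu$b - lam$a)^2" using far r by (metis abs_le_square_iff abs_of_pos)
    hence "r^2 * (P$a$b)^2 \<le> (mu$b - lam$a)^2 * (P$a$b)^2" by (simp add: mult_right_mono)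
    thus "r^2 * (P$a$b)^2 \<le> (Q$a$b)^2" by (simp add: Q_entry power_mult_distrib)
  qed
  also have "\<dots> \<le> (\<Sum>a\<in>UNIV. (Q$a$b)^2)" by (intro sum_mono2) auto
  also have "\<dots> \<le> (norm (M - A))^2" by (rule Q_col)
  finally show ?thesis using r by (simp add: field_simps)
qed

lemma close_exists: "\<exists>a. \<bar>mu$b - lam$a\<bar> \<le> norm (M - A)"
proof -
  define m where "m = Min ((\<lambda>a. \<bar>mu$b - lam$a\<bar>) ` UNIV)"
  have "m \<in> (\<lambda>a. \<bar>mu$b - lam$a\<bar>) ` UNIV" unfolding m_def by (rule Min_in) auto
  then obtain a where am: "m = \<bar>mu$b - lam$a\<bar>" by blast
  have "m \<le> norm (M - A)"
  proof (rule ccontr)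
    assume "\<not> m \<le> norm (M - A)"
    hence mpos: "m > 0" "norm (M - A) < m" using norm_ge_zero[of "M - A"] by linarith+
    have "(\<Sum>a\<in>UNIV. (P$a$b)^2) \<le> (norm (M - A))^2 / m^2"
      using mpos(1) by (rule weighted_bound) (simp add: m_def)
    hence "1 \<le> (norm (M - A))^2 / m^2" using orth_col_sum[OF oP] by simp
    hence "m^2 \<le> (norm (M - A))^2" using mpos by (simp add: field_simps)
    moreover have "(norm (M - A))^2 < m^2" using mpos by (intro power_strict_mono) auto
    ultimately show False by simp
  qed
  thus ?thesis using am by auto
qed

lemma count_le:
  assumes dS: "\<And>b. b \<in> S \<Longrightarrow> (\<Sum>a\<in>-T. (P$a$b)^2) \<le> \<delta>"
    and small: "real CARD('n) * \<delta> < 1"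
  shows "card S \<le> card T"
proof -
  have "(\<Sum>b\<in>S. \<Sum>a\<in>T. (P$a$b)^2) \<ge> (\<Sum>b\<in>S. 1 - \<delta>)"
  proof (rule sum_mono)
    fix b assume "b \<in> S"
    have "(\<Sum>a\<in>UNIV. (P$a$b)^2) = (\<Sum>a\<in>UNIV - T. (P$a$b)^2) + (\<Sum>a\<in>T. (P$a$b)^2)"
      by (rule sum.subset_diff) auto
    hence "(\<Sum>a\<in>UNIV. (P$a$b)^2) = (\<Sum>a\<in>T. (P$a$b)^2) + (\<Sum>a\<in>-T. (P$a$b)^2)"
      by (simp only: Compl_eq_Diff_UNIV add.commute)
    thus "1 - \<delta> \<le> (\<Sum>a\<in>T. (P$a$b)^2)" using orth_col_sum[OF oP, of b] dS[OF \<open>b \<in> S\<close>] by simp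
  qed
  moreover have "(\<Sum>b\<in>S. \<Sum>a\<in>T. (P$a$b)^2) \<le> (\<Sum>a\<in>T. \<Sum>b\<in>UNIV. (P$a$b)^2)"
  proof -
    have "(\<Sum>b\<in>S. \<Sum>a\<in>T. (P$a$b)^2) = (\<Sum>a\<in>T. \<Sum>b\<in>S. (P$a$b)^2)" by (rule sum.swap)
    also have "\<dots> \<le> (\<Sum>a\<in>T. \<Sum>b\<in>UNIV. (P$a$b)^2)"
      by (intro sum_mono sum_mono2) auto
    finally show ?thesis .
  qed
  moreover have "(\<Sum>a\<in>T. \<Sum>b\<in>UNIV. (P$a$b)^2) = card T" using orth_row_sum[OF oP] by simp
  ultimately have le: "real (card S) * (1 - \<delta>) \<le> card T" by simp
  show ?thesis
  proof (cases "S = {}")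
    case True thus ?thesis by simp
  next
    case False
    then obtain b where "b \<in> S" by auto
    have "0 \<le> (\<Sum>a\<in>-T. (P$a$b)^2)" by (intro sum_nonneg) simp
    hence d0: "\<delta> \<ge> 0" using dS[OF \<open>b \<in> S\<close>] by linarith
    have "card S \<le> card (UNIV::'n set)" by (simp add: card_mono)
    hence "real (card S) * \<delta> \<le> real CARD('n) * \<delta>" using d0 by (simp add: mult_right_mono)
    hence "real (card S) < real (card T) + 1" using le small by (simp add: algebra_simps)
    thus ?thesis by simp
  qed
qed

end


context pert
begin

lemma thresh:
  assumes slam: "\<And>i j. i \<le> j \<Longrightarrow> lam$i \<le> lam$j" and smu: "\<And>i j. i \<le> j \<Longrightarrow> mu$i \<le> mu$j"
    and r: "r > 0" and far: "\<And>c. r \<le> \<bar>lam$c - t\<bar>"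
    and small: "real CARD('n) * ((norm (M - A))^2 / r^2) < 1"
  shows "{b. mu$b < t} = {a. lam$a < t}"
proof -
  define S where "S = {b. mu$b < t}"
  define T where "T = {a. lam$a < t}"
  have c1: "card S \<le> card T"
  proof (rule count_le[OF _ small])
    fix b assume "b \<in> S"
    show "(\<Sum>a\<in>-T. (P$a$b)^2) \<le> (norm (M - A))^2 / r^2"
    proof (rule weighted_bound[OF r])
      fix a assume "a \<in> -T"
      hence "lam$a \<ge> t" unfolding T_def by simp
      hence "lam$a \<ge> t + r" using far[of a] by simp
      thus "r \<le> \<bar>mu$b - lam$a\<bar>" using \<open>b \<in> S\<close> unfolding S_def by simp
    qed
  qed
  have c2: "card (-S) \<le> card (-T)"
  proof (rule count_le[OF _ small])
    fix b assume "b \<in> -S"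
    show "(\<Sum>a\<in>- (-T). (P$a$b)^2) \<le> (norm (M - A))^2 / r^2"
    proof (rule weighted_bound[OF r])
      fix a assume "a \<in> - (-T)"
      hence "lam$a < t" unfolding T_def by simp
      hence "lam$a \<le> t - r" using far[of a] by simp
      thus "r \<le> \<bar>mu$b - lam$a\<bar>" using \<open>b \<in> -S\<close> unfolding S_def by simp
    qed
  qed
  have "card (-S) = CARD('n) - card S" "card (-T) = CARD('n) - card T"
    by (simp_all add: Compl_eq_Diff_UNIV card_Diff_subset)
  moreover have "card S \<le> CARD('n)" "card T \<le> CARD('n)" by (simp_all add: card_mono)
  ultimately have "card S = card T" using c1 c2 by linarith
  moreover have "x \<in> S \<Longrightarrow> y \<le> x \<Longrightarrow> y \<in> S" for x y using smu[of y x] unfolding S_def by simp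
  moreover have "x \<in> T \<Longrightarrow> y \<le> x \<Longrightarrow> y \<in> T" for x y using slam[of y x] unfolding T_def by simp
  ultimately have "S = T" using downset_eq by blast
  thus ?thesis unfolding S_def T_def .
qed

lemma weyl:
  assumes slam: "\<And>i j. i \<le> j \<Longrightarrow> lam$i \<le> lam$j" and smu: "\<And>i j. i \<le> j \<Longrightarrow> mu$i \<le> mu$j"
    and g: "g > 0" and gap: "\<And>a b. lam$a \<noteq> lam$b \<Longrightarrow> g \<le> \<bar>lam$a - lam$b\<bar>"
    and small: "norm (M - A) * (2 * (real CARD('n) + 1)) < g"
  shows "\<bar>mu$b - lam$b\<bar> \<le> norm (M - A)"
proof -
  define e where "e = norm (M - A)"
  define n where "n = real CARD('n)"
  have e0: "e \<ge> 0" unfolding e_def by simp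
  have n0: "n \<ge> 0" unfolding n_def by simp
  have eg: "e < g / 2"
  proof -
    have "e * 2 \<le> e * (2 * (n + 1))" using e0 n0 by (intro mult_left_mono) auto
    thus ?thesis using small unfolding e_def n_def by simp
  qed
  have sm2: "n * (e^2 / (g/2)^2) < 1"
  proof -
    have "(e * (2 * (n + 1)))^2 < g^2" using small e0 n0 unfolding e_def n_def
      by (intro power_strict_mono) auto
    moreover have "(e * (2 * (n + 1)))^2 = 4 * e^2 * (n+1)^2" by (simp add: power2_eq_square algebra_simps)
    ultimately have "4 * e^2 * (n+1)^2 < g^2" by simp
    moreover have "4 * e^2 * n \<le> 4 * e^2 * (n+1)^2"
      using e0 n0 by (intro mult_left_mono) (auto simp: power2_eq_square algebra_simps)
    ultimately have "4 * e^2 * n < g^2" by linarith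
    thus ?thesis using g by (simp add: field_simps power2_eq_square)
  qed
  obtain a where a: "\<bar>mu$b - lam$a\<bar> \<le> e" using close_exists unfolding e_def by blast
  have "lam$a = lam$b"
  proof (rule ccontr)
    assume ne: "lam$a \<noteq> lam$b"
    hence gab: "g \<le> \<bar>lam$a - lam$b\<bar>" by (rule gap)
    have farc: "g/2 \<le> \<bar>lam$c - (lam$x + g/2)\<bar>" for c x
    proof (cases "lam$c = lam$x")
      case True thus ?thesis by simp
    next
      case False thus ?thesis using gap[OF False] by linarith
    qed
    have g2: "g/2 > 0" using g by simp
    show False
    proof (cases "lam$a < lam$b")
      case True
      have eq: "{c. mu$c < lam$a + g/2} = {c. lam$c < lam$a + g/2}"
        using thresh[OF slam smu g2 farc[where x=a]] sm2 unfolding e_def n_def by simp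
      have "mu$b < lam$a + g/2" using a eg by linarith
      hence "lam$b < lam$a + g/2" using eq by blast
      thus False using True gab g by linarith
    next
      case False
      hence lt: "lam$b < lam$a" using ne by simp
      have eq: "{c. mu$c < lam$b + g/2} = {c. lam$c < lam$b + g/2}"
        using thresh[OF slam smu g2 farc[where x=b]] sm2 unfolding e_def n_def by simp
      have "lam$b < lam$b + g/2" using g by simp
      hence "mu$b < lam$b + g/2" using eq by blast
      thus False using lt gab a eg by linarith
    qed
  qed
  thus ?thesis using a unfolding e_def by simp
qed

lemma inner_formula:
  "(U ** diag_mat gam ** transpose U) \<bullet> M = (\<Sum>a\<in>UNIV. \<Sum>b\<in>UNIV. gam$a * mu$b * (P$a$b)^2)"
proof -
  have "transpose U ** (U ** diag_mat gam ** transpose U) ** W = diag_mat gam ** P"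
    unfolding P_def by (metis UtU matrix_mul_assoc matrix_mul_lid)
  moreover have "transpose U ** M ** W = P ** diag_mat mu"
    unfolding Mdef P_def by (metis WtW matrix_mul_assoc matrix_mul_rid)
  ultimately have "(U ** diag_mat gam ** transpose U) \<bullet> M = (diag_mat gam ** P) \<bullet> (P ** diag_mat mu)"
    using inner_orth_sandwich[OF oU oW, of "U ** diag_mat gam ** transpose U" M] by simp
  also have "\<dots> = (\<Sum>a\<in>UNIV. \<Sum>b\<in>UNIV. gam$a * mu$b * (P$a$b)^2)"
    unfolding inner_mat diag_mult_left diag_mult_right by (simp add: power2_eq_square ac_simps)
  finally show ?thesis .
qed

lemma gam_mu: "gam \<bullet> mu = (\<Sum>a\<in>UNIV. \<Sum>b\<in>UNIV. gam$b * mu$b * (P$a$b)^2)"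
proof -
  have "(\<Sum>a\<in>UNIV. \<Sum>b\<in>UNIV. gam$b * mu$b * (P$a$b)^2) = (\<Sum>b\<in>UNIV. \<Sum>a\<in>UNIV. gam$b * mu$b * (P$a$b)^2)"
    by (rule sum.swap)
  also have "\<dots> = (\<Sum>b\<in>UNIV. gam$b * mu$b * (\<Sum>a\<in>UNIV. (P$a$b)^2))" by (simp add: sum_distrib_left)
  also have "\<dots> = gam \<bullet> mu" using orth_col_sum[OF oP] by (simp add: inner_vec_def)
  finally show ?thesis by simp
qed

lemma diff_bound:
  assumes g: "g > 0" and gap: "\<And>a b. lam$a \<noteq> lam$b \<Longrightarrow> g \<le> \<bar>lam$a - lam$b\<bar>"
    and gcons: "\<And>a b. lam$a = lam$b \<Longrightarrow> gam$a = gam$b"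
    and w: "\<And>b. \<bar>mu$b - lam$b\<bar> \<le> norm (M - A)"
    and eg: "norm (M - A) \<le> g/2"
  shows "\<bar>gam \<bullet> mu - (U ** diag_mat gam ** transpose U) \<bullet> M\<bar>
     \<le> (\<Sum>a\<in>UNIV. \<Sum>b\<in>UNIV. \<bar>gam$b - gam$a\<bar> * (\<bar>lam$b\<bar> + g) * (4 / g^2)) * (norm (M - A))^2"
proof -
  define e where "e = norm (M - A)"
  have e0: "e \<ge> 0" unfolding e_def by simp
  have "gam \<bullet> mu - (U ** diag_mat gam ** transpose U) \<bullet> M
     = (\<Sum>a\<in>UNIV. \<Sum>b\<in>UNIV. (gam$b - gam$a) * mu$b * (P$a$b)^2)"
    unfolding gam_mu inner_formula by (simp add: sum_subtractf[symmetric] algebra_simps)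
  also have "\<bar>\<dots>\<bar> \<le> (\<Sum>a\<in>UNIV. \<Sum>b\<in>UNIV. \<bar>(gam$b - gam$a) * mu$b * (P$a$b)^2\<bar>)"
    by (rule order_trans[OF sum_abs sum_mono]) (rule sum_abs)
  also have "\<dots> \<le> (\<Sum>a\<in>UNIV. \<Sum>b\<in>UNIV. \<bar>gam$b - gam$a\<bar> * (\<bar>lam$b\<bar> + g) * (4 / g^2) * e^2)"
  proof (intro sum_mono)
    fix a b
    show "\<bar>(gam$b - gam$a) * mu$b * (P$a$b)^2\<bar> \<le> \<bar>gam$b - gam$a\<bar> * (\<bar>lam$b\<bar> + g) * (4 / g^2) * e^2"
    proof (cases "lam$a = lam$b")
      case True thus ?thesis using gcons[OF True] by simp
    next
      case False
      have "g \<le> \<bar>lam$a - lam$b\<bar>" using gap[OF False] .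
      hence far: "g/2 \<le> \<bar>mu$b - lam$a\<bar>" using w[of b] eg unfolding e_def by linarith
      have "(\<Sum>a'\<in>{a}. (P$a'$b)^2) \<le> e^2 / (g/2)^2"
        unfolding e_def by (rule weighted_bound) (use g far in auto)
      hence Pb: "(P$a$b)^2 \<le> (4 / g^2) * e^2" by (simp add: power_divide field_simps)
      have mb: "\<bar>mu$b\<bar> \<le> \<bar>lam$b\<bar> + g" using w[of b] eg g unfolding e_def by linarith
      have "\<bar>(gam$b - gam$a) * mu$b * (P$a$b)^2\<bar> = \<bar>gam$b - gam$a\<bar> * \<bar>mu$b\<bar> * (P$a$b)^2"
        by (simp add: abs_mult)
      also have "\<dots> \<le> \<bar>gam$b - gam$a\<bar> * (\<bar>lam$b\<bar> + g) * ((4 / g^2) * e^2)"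
        using g by (intro mult_mono mb Pb) (auto intro!: mult_nonneg_nonneg)
      finally show ?thesis by (simp only: mult.assoc)
    qed
  qed
  also have "\<dots> = (\<Sum>a\<in>UNIV. \<Sum>b\<in>UNIV. \<bar>gam$b - gam$a\<bar> * (\<bar>lam$b\<bar> + g) * (4 / g^2)) * e^2"
    by (simp add: sum_distrib_right)
  finally show ?thesis unfolding e_def .
qed

end


lemma sorted_eig_sym:
  fixes A :: "real^('n::{finite,linorder})^('n::{finite,linorder})"
  assumes "transpose A = A"
  shows "\<And>i j. i \<le> j \<Longrightarrow> sorted_eigenvalues A $ i \<le> sorted_eigenvalues A $ j"
proof -
  obtain W \<mu> where "orthogonal_matrix W" "\<And>i j. i \<le> j \<Longrightarrow> \<mu>$i \<le> \<mu>$j"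
    "A = W ** diag_mat \<mu> ** transpose W" using spectral_decomp[OF assms] by blast
  hence "sorted_eigenvalues A = \<mu>" using sorted_eig_decomp by blast
  thus "\<And>i j. i \<le> j \<Longrightarrow> sorted_eigenvalues A $ i \<le> sorted_eigenvalues A $ j"
    using \<open>\<And>i j. i \<le> j \<Longrightarrow> \<mu>$i \<le> \<mu>$j\<close> by simp
qed

lemma grad_consistent:
  fixes J :: "real^('n::{finite,linorder}) \<Rightarrow> real"
  assumes Jsym: "symmetric_fun J"
    and Jd: "(J has_derivative (\<lambda>h. gam \<bullet> h)) (at lam)"
    and eq: "lam$a = lam$b"
  shows "gam$a = gam$b"
proof -
  define \<tau> where "\<tau> = Transposition.transpose a b"
  define T where "T v = (\<chi> i. v $ \<tau> i)" for v :: "real^('n::{finite,linorder})"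
  have perm: "\<tau> permutes UNIV" unfolding \<tau>_def by (simp add: permutes_swap_id)
  have JT: "J (T v) = J v" for v using Jsym perm unfolding symmetric_fun_def T_def by blast
  have lin: "linear T" unfolding T_def by (intro linearI) (simp_all add: vec_eq_iff)
  hence bl: "bounded_linear T" by (simp add: linear_conv_bounded_linear)
  have Tl: "T lam = lam" unfolding T_def \<tau>_def using eq
    by (simp add: vec_eq_iff Transposition.transpose_def)
  have "((\<lambda>v. J (T v)) has_derivative (\<lambda>h. gam \<bullet> T h)) (at lam)"
    by (rule has_derivative_compose[OF bounded_linear_imp_has_derivative[OF bl]]) (simp add: Tl Jd)
  hence "(J has_derivative (\<lambda>h. gam \<bullet> T h)) (at lam)" by (simp add: JT)
  hence "(\<lambda>h. gam \<bullet> T h) = (\<lambda>h. gam \<bullet> h)" using Jd has_derivative_unique by blast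
  hence "gam \<bullet> T (axis a 1) = gam \<bullet> axis a 1" by metis
  moreover have "T (axis a 1) = axis b 1" unfolding T_def \<tau>_def
    by (simp add: vec_eq_iff axis_def Transposition.transpose_def)
  ultimately show ?thesis by (simp add: inner_axis)
qed

lemma gap_exists:
  fixes lam :: "real^'n"
  obtains g where "g > 0" "\<And>a b. lam$a \<noteq> lam$b \<Longrightarrow> g \<le> \<bar>lam$a - lam$b\<bar>"
proof -
  define G where "G = insert 1 {\<bar>lam$a - lam$b\<bar> | a b. lam$a \<noteq> lam$b}"
  have fG: "finite G" unfolding G_def
  proof -
    have "{\<bar>lam$a - lam$b\<bar> | a b. lam$a \<noteq> lam$b} \<subseteq> (\<lambda>(a,b). \<bar>lam$a - lam$b\<bar>) ` UNIV" by auto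
    thus "finite (insert 1 {\<bar>lam$a - lam$b\<bar> | a b. lam$a \<noteq> lam$b})" by (meson finite_imageI finite_insert finite_subset finite)
  qed
  have "Min G \<in> G" using fG by (rule Min_in) (simp add: G_def)
  hence pos: "Min G > 0" unfolding G_def by auto
  show ?thesis
  proof (rule that[OF pos])
    fix a b assume "lam$a \<noteq> lam$b"
    hence "\<bar>lam$a - lam$b\<bar> \<in> G" unfolding G_def by blast
    thus "Min G \<le> \<bar>lam$a - lam$b\<bar>" using fG by simp
  qed
qed

lemma lewis:
  fixes A U :: "real^('n::{finite,linorder})^('n::{finite,linorder})" and J :: "real^('n::{finite,linorder}) \<Rightarrow> real"
  assumes oU: "orthogonal_matrix U" and symA: "transpose A = A"
    and Adiag: "A = U ** diag_mat (sorted_eigenvalues A) ** transpose U"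
    and Jsym: "symmetric_fun J"
    and Jd: "(J has_derivative (\<lambda>h. gam \<bullet> h)) (at (sorted_eigenvalues A))"
  shows "((\<lambda>M. J (sorted_eigenvalues M)) has_derivative (\<lambda>H. (U ** diag_mat gam ** transpose U) \<bullet> H))
           (at A within {M. transpose M = M})"
proof -
  define lam where "lam = sorted_eigenvalues A"
  define V where "V = U ** diag_mat gam ** transpose U"
  have slam: "\<And>i j. i \<le> j \<Longrightarrow> lam$i \<le> lam$j" using sorted_eig_sym[OF symA] lam_def by blast
  have gcons: "\<And>a b. lam$a = lam$b \<Longrightarrow> gam$a = gam$b" using grad_consistent[OF Jsym] Jd lam_def by blast
  obtain g where g: "g > 0" "\<And>a b. lam$a \<noteq> lam$b \<Longrightarrow> g \<le> \<bar>lam$a - lam$b\<bar>"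
    using gap_exists by blast
  define K where "K = (\<Sum>a\<in>UNIV. \<Sum>b\<in>UNIV. \<bar>gam$b - gam$a\<bar> * (\<bar>lam$b\<bar> + g) * (4 / g^2))"
  have K0: "K \<ge> 0" unfolding K_def using g by (intro sum_nonneg mult_nonneg_nonneg) auto
  define n where "n = real CARD('n)"
  have n0: "n \<ge> 0" unfolding n_def by simp
  have VA: "gam \<bullet> lam = V \<bullet> A"
  proof -
    interpret p0: pert U U lam lam A A using oU Adiag lam_def by unfold_locales auto
    have "\<bar>gam \<bullet> lam - V \<bullet> A\<bar> \<le> K * (norm (A - A))^2"
      unfolding V_def K_def by (rule p0.diff_bound[OF g(1) g(2) gcons]) (use g in auto)
    thus ?thesis by simp
  qed
  show ?thesis unfolding has_derivative_within_alt
  proof (intro conjI allI impI)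
    show "bounded_linear (\<lambda>H. (U ** diag_mat gam ** transpose U) \<bullet> H)" by (rule bounded_linear_inner_right)
    fix e :: real assume e: "e > 0"
    define e' where "e' = e / (2 * (n + 1))"
    have e': "e' > 0" unfolding e'_def using e n0 by simp
    obtain d1 where d1: "d1 > 0" "\<And>v. norm (v - lam) < d1 \<Longrightarrow>
        norm (J v - J lam - gam \<bullet> (v - lam)) \<le> e' * norm (v - lam)"
      using Jd[unfolded has_derivative_at_alt] e' unfolding lam_def by blast
    define d where "d = Min {d1 / (n + 1), g / (2 * (n + 1)), e / (2 * (K + 1))}"
    have dpos: "d > 0" unfolding d_def using d1 g e n0 K0 by simp
    have dle: "d \<le> d1 / (n + 1)" "d \<le> g / (2 * (n + 1))" "d \<le> e / (2 * (K + 1))"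
      unfolding d_def by simp_all
    show "\<exists>d>0. \<forall>M\<in>{M. transpose M = M}. norm (M - A) < d \<longrightarrow>
        norm (J (sorted_eigenvalues M) - J (sorted_eigenvalues A) - (U ** diag_mat gam ** transpose U) \<bullet> (M - A))
          \<le> e * norm (M - A)"
    proof (intro exI[of _ d] conjI ballI impI dpos)
      fix M assume "M \<in> {M. transpose M = M}" and Md: "norm (M - A) < d"
      hence symM: "transpose M = M" by simp
      obtain W mu where W: "orthogonal_matrix W" "\<And>i j. i \<le> j \<Longrightarrow> mu$i \<le> mu$j"
        "M = W ** diag_mat mu ** transpose W" using spectral_decomp[OF symM] by blast
      have smu: "sorted_eigenvalues M = mu" using sorted_eig_decomp W by blast
      interpret p: pert U W lam mu A M using oU W Adiag lam_def by unfold_locales auto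
      define eps where "eps = norm (M - A)"
      have eps0: "eps \<ge> 0" unfolding eps_def by simp
      have epsd: "eps < d" using Md unfolding eps_def .
      have small: "norm (M - A) * (2 * (real CARD('n) + 1)) < g"
      proof -
        have "eps < g / (2 * (n + 1))" using epsd dle(2) by simp
        thus ?thesis using n0 unfolding eps_def n_def by (simp add: field_simps)
      qed
      have w: "\<bar>mu$b - lam$b\<bar> \<le> eps" for b
        unfolding eps_def by (rule p.weyl[OF slam W(2) g(1) g(2) small])
      have eg: "eps \<le> g/2"
      proof -
        have "eps * 2 \<le> eps * (2 * (n + 1))" using eps0 n0 by (intro mult_left_mono) auto
        thus ?thesis using small unfolding eps_def n_def by simp
      qed
      have nml: "norm (mu - lam) \<le> n * eps"
      proof -
        have "norm (mu - lam) \<le> (\<Sum>b\<in>UNIV. \<bar>(mu - lam)$b\<bar>)" by (rule norm_le_l1_cart)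
        also have "\<dots> \<le> (\<Sum>b\<in>(UNIV::'n set). eps)" using w by (intro sum_mono) simp
        finally show ?thesis unfolding n_def by simp
      qed
      have "n * eps < d1"
      proof -
        have "n * eps \<le> (n + 1) * eps" using eps0 by (simp add: mult_right_mono)
        also have "(n + 1) * eps < (n + 1) * (d1 / (n + 1))"
          using epsd dle(1) n0 by (intro mult_strict_left_mono) auto
        also have "\<dots> = d1" using n0 by simp
        finally show ?thesis .
      qed
      hence hJ0: "norm (J mu - J lam - gam \<bullet> (mu - lam)) \<le> e' * norm (mu - lam)"
        using d1(2) nml by simp
      have hJ: "\<bar>J mu - J lam - gam \<bullet> (mu - lam)\<bar> \<le> e / 2 * eps"
      proof -
        have "e' * norm (mu - lam) \<le> e' * (n * eps)" using nml e' by (simp add: mult_left_mono)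
        also have "\<dots> \<le> e / 2 * eps"
        proof -
          have "e' * n = e / 2 * (n / (n + 1))" unfolding e'_def by (simp add: field_simps)
          also have "\<dots> \<le> e / 2 * 1" using e n0 by (intro mult_left_mono) auto
          finally have "e' * n \<le> e / 2" by simp
          thus ?thesis using eps0 by (metis mult.assoc mult_right_mono)
        qed
        finally show ?thesis using hJ0 by simp
      qed
      have hD0: "\<bar>gam \<bullet> mu - V \<bullet> M\<bar> \<le> K * eps^2"
        unfolding V_def K_def eps_def by (rule p.diff_bound[OF g(1) g(2) gcons]) (use w eg in \<open>auto simp: eps_def\<close>)
      have hD: "\<bar>gam \<bullet> mu - V \<bullet> M\<bar> \<le> e / 2 * eps"
      proof -
        have "K * eps \<le> (K + 1) * eps" using eps0 by (simp add: mult_right_mono)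
        also have "(K + 1) * eps \<le> (K + 1) * (e / (2 * (K + 1)))"
          using epsd dle(3) K0 by (intro mult_left_mono) auto
        also have "\<dots> = e / 2"
        proof -
          have Kp: "K + 1 \<noteq> 0" using K0 by simp
          show ?thesis using Kp by (simp add: field_simps)
        qed
        finally have "K * eps \<le> e / 2" .
        hence "(K * eps) * eps \<le> (e / 2) * eps" using eps0 by (rule mult_right_mono)
        hence "K * eps^2 \<le> e / 2 * eps" by (simp add: power2_eq_square mult.assoc)
        thus ?thesis using hD0 by simp
      qed
      have "J mu - J lam - V \<bullet> (M - A) = (J mu - J lam - gam \<bullet> (mu - lam)) + (gam \<bullet> mu - V \<bullet> M)"
        using VA by (simp add: inner_diff_right algebra_simps)
      hence "\<bar>J mu - J lam - V \<bullet> (M - A)\<bar> \<le> e / 2 * eps + e / 2 * eps" using hJ hD by linarith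
      thus "norm (J (sorted_eigenvalues M) - J (sorted_eigenvalues A) - (U ** diag_mat gam ** transpose U) \<bullet> (M - A))
          \<le> e * norm (M - A)" unfolding smu lam_def[symmetric] V_def[symmetric] eps_def by simp
    qed
  qed
qed


lemma has_derivative_vec_comp:
  fixes F :: "'a::real_normed_vector \<Rightarrow> ('b::euclidean_space)^'n"
  assumes "\<And>k. ((\<lambda>y. F y $ k) has_derivative (\<lambda>h. F' h $ k)) (at a)"
  shows "(F has_derivative F') (at a)"
proof -
  have "((\<lambda>y. F y \<bullet> j) has_derivative (\<lambda>h. F' h \<bullet> j)) (at a)" if "j \<in> Basis" for j
  proof -
    obtain k u where j: "j = axis k u" and u: "u \<in> Basis" using \<open>j \<in> Basis\<close> unfolding Basis_vec_def by blast
    have "((\<lambda>y. F y $ k \<bullet> u) has_derivative (\<lambda>h. F' h $ k \<bullet> u)) (at a)"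
      by (rule has_derivative_inner_left[OF assms])
    thus ?thesis unfolding j inner_axis .
  qed
  thus ?thesis using has_derivative_componentwise_within[of F F' a UNIV] by blast
qed

lemma sqdist_deriv:
  "((\<lambda>y. (norm (y - c))^2) has_derivative (\<lambda>h. 2 * ((a - c) \<bullet> h))) (at a)"
proof -
  have "((\<lambda>y. (y - c) \<bullet> (y - c)) has_derivative (\<lambda>h. (a - c) \<bullet> h + h \<bullet> (a - c))) (at a)"
    by (auto intro!: derivative_eq_intros)
  moreover have "(\<lambda>h. (a - c) \<bullet> h + h \<bullet> (a - c)) = (\<lambda>h. 2 * ((a - c) \<bullet> h))"
    by (simp add: inner_commute fun_eq_iff)
  ultimately show ?thesis by (simp add: power2_norm_eq_inner)
qed

lemma f_sqdist_deriv:
  fixes f f' :: "real \<Rightarrow> real" and a c :: "'a::real_inner"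
  assumes f_deriv: "\<And>t. t > 0 \<Longrightarrow> (f has_real_derivative f' t) (at t)" and ne: "a \<noteq> c"
  shows "((\<lambda>y. f ((norm (y - c))^2)) has_derivative
           (\<lambda>h. 2 * ((a - c) \<bullet> h) * f' ((norm (a - c))^2))) (at a)"
proof -
  have "(norm (a - c))^2 > 0" using ne by simp
  hence "(f has_real_derivative f' ((norm (a - c))^2)) (at ((norm (a - c))^2))" by (rule f_deriv)
  thus ?thesis by (rule DERIV_compose_FDERIV[OF _ sqdist_deriv])
qed


definition dd :: "(real \<Rightarrow> real) \<Rightarrow> ('n \<Rightarrow> real^'d) \<Rightarrow> 'n \<Rightarrow> 'n \<Rightarrow> real^'d \<Rightarrow> real" where
  "dd f' x i k h = 2 * ((x i - x k) \<bullet> h) * f' ((norm (x i - x k))^2)"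

definition dW :: "(real \<Rightarrow> real) \<Rightarrow> ('n \<Rightarrow> real^'d) \<Rightarrow> 'n \<Rightarrow> 'n \<Rightarrow> 'n \<Rightarrow> real^'d \<Rightarrow> real" where
  "dW f' x i p q h = (if p = i then dd f' x i q h else 0) + (if q = i then dd f' x i p h else 0)"

lemma dd_self: "dd f' x i i h = 0" by (simp add: dd_def)

lemma weight_entry: "weight_mat f z $ p $ q = (if p = q then 0 else f ((norm (z p - z q))^2))"
  by (simp add: weight_mat_def)

lemma lap_entry: "laplacian f z $ p $ q = (if p = q then (\<Sum>k\<in>UNIV. weight_mat f z $ p $ k) else 0) - weight_mat f z $ p $ q"
  by (simp add: laplacian_def degree_mat_def)

lemma weight_deriv:
  fixes x :: "'n::finite \<Rightarrow> real^'d" and f f' :: "real \<Rightarrow> real"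
  assumes inj: "inj x" and f_deriv: "\<And>t. t > 0 \<Longrightarrow> (f has_real_derivative f' t) (at t)"
  shows "((\<lambda>y. weight_mat f (x(i := y)) $ p $ q) has_derivative dW f' x i p q) (at (x i))"
proof (cases "p = q")
  case True
  have "dW f' x i p q = (\<lambda>h. 0)" using True by (auto simp: dW_def dd_self fun_eq_iff)
  thus ?thesis using True by (simp add: weight_entry)
next
  case pq: False
  show ?thesis
  proof (cases "p = i")
    case pi: True
    hence qi: "q \<noteq> i" using pq by simp
    have ne: "x i \<noteq> x q" using inj qi by (simp add: inj_eq)
    have fe: "(\<lambda>y. weight_mat f (x(i := y)) $ p $ q) = (\<lambda>y. f ((norm (y - x q))^2))"
      using pq pi qi by (simp add: weight_entry fun_eq_iff)
    have de: "dW f' x i p q = (\<lambda>h. 2 * ((x i - x q) \<bullet> h) * f' ((norm (x i - x q))^2))"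
      using pi qi by (simp add: dW_def dd_def fun_eq_iff)
    show ?thesis unfolding fe de by (rule f_sqdist_deriv[OF f_deriv ne])
  next
    case pi: False
    show ?thesis
    proof (cases "q = i")
      case qi: True
      have ne: "x i \<noteq> x p" using inj pi by (simp add: inj_eq)
      have fe: "(\<lambda>y. weight_mat f (x(i := y)) $ p $ q) = (\<lambda>y. f ((norm (y - x p))^2))"
        using pq pi qi by (simp add: weight_entry fun_eq_iff norm_minus_commute)
      have de: "dW f' x i p q = (\<lambda>h. 2 * ((x i - x p) \<bullet> h) * f' ((norm (x i - x p))^2))"
        using pi qi by (simp add: dW_def dd_def fun_eq_iff)
      show ?thesis unfolding fe de by (rule f_sqdist_deriv[OF f_deriv ne])
    next
      case qi: False
      have fe: "(\<lambda>y. weight_mat f (x(i := y)) $ p $ q) = (\<lambda>y. f ((norm (x p - x q))^2))"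
        using pq pi qi by (simp add: weight_entry fun_eq_iff)
      have de: "dW f' x i p q = (\<lambda>h. 0)"
        using pi qi by (simp add: dW_def fun_eq_iff)
      show ?thesis unfolding fe de by simp
    qed
  qed
qed

definition DM :: "(real \<Rightarrow> real) \<Rightarrow> ('n::finite \<Rightarrow> real^'d) \<Rightarrow> 'n \<Rightarrow> real^'d \<Rightarrow> real^'n^'n" where
  "DM f' x i h = (\<chi> p q. (if p = q then (\<Sum>k\<in>UNIV. dW f' x i p k h) else 0) - dW f' x i p q h)"

lemma lap_deriv:
  fixes x :: "'n::finite \<Rightarrow> real^'d" and f f' :: "real \<Rightarrow> real"
  assumes inj: "inj x" and f_deriv: "\<And>t. t > 0 \<Longrightarrow> (f has_real_derivative f' t) (at t)"
  shows "((\<lambda>y. laplacian f (x(i := y))) has_derivative DM f' x i) (at (x i))"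
proof (rule has_derivative_vec_comp)
  fix p
  show "((\<lambda>y. laplacian f (x(i := y)) $ p) has_derivative (\<lambda>h. DM f' x i h $ p)) (at (x i))"
  proof (rule has_derivative_vec_comp)
    fix q
    have w: "\<And>k. ((\<lambda>y. weight_mat f (x(i := y)) $ p $ k) has_derivative dW f' x i p k) (at (x i))"
      by (rule weight_deriv[OF inj f_deriv])
    have "((\<lambda>y. (if p = q then (\<Sum>k\<in>UNIV. weight_mat f (x(i := y)) $ p $ k) else 0) - weight_mat f (x(i := y)) $ p $ q)
        has_derivative (\<lambda>h. (if p = q then (\<Sum>k\<in>UNIV. dW f' x i p k h) else 0) - dW f' x i p q h)) (at (x i))"
    proof (cases "p = q")
      case True
      show ?thesis unfolding if_P[OF True] by (intro has_derivative_diff has_derivative_sum w)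
    next
      case False
      show ?thesis unfolding if_not_P[OF False] by (intro has_derivative_diff has_derivative_const w)
    qed
    thus "((\<lambda>y. laplacian f (x(i := y)) $ p $ q) has_derivative (\<lambda>h. DM f' x i h $ p $ q)) (at (x i))"
      by (simp add: lap_entry DM_def)
  qed
qed


lemma inner_DM:
  fixes V :: "real^'n::finite^'n" and x :: "'n \<Rightarrow> real^'d"
  assumes symV: "\<And>p q. V$p$q = V$q$p"
  shows "V \<bullet> DM f' x i h = (\<Sum>k\<in>UNIV. (V$k$k - 2 * V$i$k + V$i$i) * dd f' x i k h)"
proof -
  let ?w = "\<lambda>p q. dW f' x i p q h"
  let ?d = "\<lambda>k. dd f' x i k h"
  let ?G = "\<lambda>p q. V$p$p - V$p$q"
  have "V \<bullet> DM f' x i h = (\<Sum>p\<in>UNIV. \<Sum>q\<in>UNIV. V$p$q * ((if p = q then (\<Sum>k\<in>UNIV. ?w p k) else 0) - ?w p q))"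
    by (simp add: inner_mat DM_def)
  also have "\<dots> = (\<Sum>p\<in>UNIV. \<Sum>q\<in>UNIV. ?G p q * ?w p q)"
  proof (rule sum.cong[OF refl])
    fix p
    have e1: "\<And>q. V$p$q * (if p = q then (\<Sum>k\<in>UNIV. ?w p k) else 0) = (if p = q then V$p$p * (\<Sum>k\<in>UNIV. ?w p k) else 0)"
      by simp
    have "(\<Sum>q\<in>UNIV. V$p$q * ((if p = q then (\<Sum>k\<in>UNIV. ?w p k) else 0) - ?w p q))
        = (\<Sum>q\<in>UNIV. V$p$q * (if p = q then (\<Sum>k\<in>UNIV. ?w p k) else 0)) - (\<Sum>q\<in>UNIV. V$p$q * ?w p q)"
      by (simp only: right_diff_distrib sum_subtractf)
    also have "(\<Sum>q\<in>UNIV. V$p$q * (if p = q then (\<Sum>k\<in>UNIV. ?w p k) else 0)) = V$p$p * (\<Sum>k\<in>UNIV. ?w p k)"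
      unfolding e1 by simp
    also have "\<dots> = (\<Sum>q\<in>UNIV. V$p$p * ?w p q)" by (simp add: sum_distrib_left)
    finally show "(\<Sum>q\<in>UNIV. V$p$q * ((if p = q then (\<Sum>k\<in>UNIV. ?w p k) else 0) - ?w p q))
        = (\<Sum>q\<in>UNIV. ?G p q * ?w p q)"
      by (simp add: sum_subtractf left_diff_distrib)
  qed
  also have "\<dots> = (\<Sum>p\<in>UNIV. \<Sum>q\<in>UNIV. (if p = i then ?G p q * ?d q else 0) + (if q = i then ?G p q * ?d p else 0))"
  proof -
    have ifm: "\<And>(a::real) P b. a * (if P then b else 0) = (if P then a * b else 0)" by simp
    show ?thesis by (simp only: dW_def distrib_left ifm)
  qed
  also have "\<dots> = (\<Sum>p\<in>UNIV. \<Sum>q\<in>UNIV. (if p = i then ?G p q * ?d q else 0))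
      + (\<Sum>p\<in>UNIV. \<Sum>q\<in>UNIV. (if q = i then ?G p q * ?d p else 0))"
    by (simp only: sum.distrib)
  also have "(\<Sum>p\<in>UNIV. \<Sum>q\<in>UNIV. (if p = i then ?G p q * ?d q else 0)) = (\<Sum>q\<in>UNIV. ?G i q * ?d q)"
  proof -
    have "(\<Sum>p\<in>UNIV. \<Sum>q\<in>UNIV. (if p = i then ?G p q * ?d q else 0))
        = (\<Sum>p\<in>UNIV. (if p = i then (\<Sum>q\<in>UNIV. ?G p q * ?d q) else 0))"
      by (rule sum.cong[OF refl]) simp
    also have "\<dots> = (\<Sum>q\<in>UNIV. ?G i q * ?d q)" by (simp only: sum.delta sum.delta' finite UNIV_I if_True)
    finally show ?thesis .
  qed
  also have "(\<Sum>p\<in>UNIV. \<Sum>q\<in>UNIV. (if q = i then ?G p q * ?d p else 0)) = (\<Sum>p\<in>UNIV. ?G p i * ?d p)"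
    by (rule sum.cong[OF refl]) (simp only: sum.delta sum.delta' finite UNIV_I if_True)
  also have "(\<Sum>q\<in>UNIV. ?G i q * ?d q) + (\<Sum>p\<in>UNIV. ?G p i * ?d p)
      = (\<Sum>k\<in>UNIV. ?G i k * ?d k + ?G k i * ?d k)" by (simp only: sum.distrib)
  also have "\<dots> = (\<Sum>k\<in>UNIV. (V$k$k - 2 * V$i$k + V$i$i) * ?d k)"
  proof (rule sum.cong[OF refl])
    fix k
    show "?G i k * ?d k + ?G k i * ?d k = (V$k$k - 2 * V$i$k + V$i$i) * ?d k"
      using symV[of k i] by (simp add: algebra_simps)
  qed
  finally show ?thesis .
qed


lemma lap_sym: "transpose (laplacian f z) = laplacian f z"
  by (simp add: vec_eq_iff transpose_def lap_entry weight_entry norm_minus_commute)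

lemma V_entry: "(U ** diag_mat g ** transpose U) $ p $ q = (\<Sum>j\<in>UNIV. U$p$j * g$j * U$q$j)"
  by (simp add: matrix_matrix_mult_def diag_mat_def transpose_def if_distrib[of "\<lambda>x. _ * x"] cong: if_cong)

lemma incidence_sum:
  fixes i k :: "'n::{finite,linorder}"
  assumes "k \<noteq> i"
  shows "(\<Sum>l\<in>UNIV. incidence {i, k} l * U $ l $ j)^2 = (U$i$j - U$k$j)^2"
proof -
  have mm: "Max {i, k} \<noteq> Min {i, k}" using assms by (cases "i < k") (auto simp: max_def min_def)
  have "incidence {i, k} l = (if l = Max {i, k} then 1 else 0) - (if l = Min {i, k} then 1 else 0)" for l
    using mm by (auto simp: incidence_def)
  hence "(\<Sum>l\<in>UNIV. incidence {i, k} l * U $ l $ j) = U $ Max {i,k} $ j - U $ Min {i,k} $ j"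
    by (simp add: left_diff_distrib sum_subtractf if_distrib[of "\<lambda>x. x * _"] cong: if_cong)
  moreover have "{Max {i,k}, Min {i,k}} = {i, k}" using assms by (cases "i < k") (auto simp: max_def min_def)
  ultimately show ?thesis using mm assms
    by (cases "i < k") (auto simp: max_def min_def power2_commute)
qed

theorem propositionA2:
  fixes x :: "'n::{finite,linorder} \<Rightarrow> real^'d"
    and i :: "'n::{finite,linorder}"
    and f f' :: "real \<Rightarrow> real"
    and J :: "real^('n::{finite,linorder}) \<Rightarrow> real"
    and gradJ :: "real^('n::{finite,linorder})"
    and U :: "real^('n::{finite,linorder})^('n::{finite,linorder})"
  assumes distinct: "inj x"
    and f_deriv: "\<And>t. t > 0 \<Longrightarrow> (f has_real_derivative f' t) (at t)"
    and J_sym: "symmetric_fun J"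
    and J_grad: "(J has_derivative (\<lambda>h. gradJ \<bullet> h)) (at (sorted_eigenvalues (laplacian f x)))"
    and U_orth: "orthogonal_matrix U"
    and U_diag: "laplacian f x = U ** diag_mat (sorted_eigenvalues (laplacian f x)) ** transpose U"
  shows "((\<lambda>y. J (sorted_eigenvalues (laplacian f (x(i := y))))) has_derivative
            (\<lambda>h. (2 *\<^sub>R (\<Sum>k\<in>UNIV - {i}.
               (let V = U ** diag_mat gradJ ** transpose U in
                  (V $ k $ k - 2 * V $ i $ k + V $ i $ i) * f' ((norm (x i - x k))\<^sup>2))
                 *\<^sub>R (x i - x k))) \<bullet> h)) (at (x i))
      \<and> ((\<lambda>y. J (sorted_eigenvalues (laplacian f (x(i := y))))) has_derivative
            (\<lambda>h. (2 *\<^sub>R (\<Sum>k\<in>UNIV - {i}.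
               (let g = (\<lambda>e. \<Sum>j\<in>UNIV. (\<Sum>l\<in>UNIV. incidence e l * U $ l $ j)\<^sup>2 * gradJ $ j) in
                  g {i, k} * f' ((norm (x i - x k))\<^sup>2))
                 *\<^sub>R (x i - x k))) \<bullet> h)) (at (x i))"
proof -
  define A where "A = laplacian f x"
  define V where "V = U ** diag_mat gradJ ** transpose U"
  have symV: "\<And>p q. V$p$q = V$q$p" unfolding V_def V_entry by (simp add: ac_simps)
  have lew: "((\<lambda>M. J (sorted_eigenvalues M)) has_derivative (\<lambda>H. V \<bullet> H)) (at A within {M. transpose M = M})"
    unfolding V_def A_def by (rule lewis[OF U_orth lap_sym U_diag J_sym J_grad])
  have Md: "((\<lambda>y. laplacian f (x(i := y))) has_derivative DM f' x i) (at (x i) within UNIV)"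
    by (rule lap_deriv[OF distinct f_deriv])
  have MA: "laplacian f (x(i := x i)) = A" by (simp add: A_def)
  have lew': "((\<lambda>M. J (sorted_eigenvalues M)) has_derivative (\<lambda>H. V \<bullet> H))
      (at (laplacian f (x(i := x i))) within (\<lambda>y. laplacian f (x(i := y))) ` UNIV)"
    unfolding MA by (rule has_derivative_subset[OF lew]) (auto simp: lap_sym)
  have comp: "((\<lambda>y. J (sorted_eigenvalues (laplacian f (x(i := y))))) has_derivative (\<lambda>h. V \<bullet> DM f' x i h)) (at (x i))"
    using has_derivative_in_compose[OF Md lew'] by simp
  have key: "V \<bullet> DM f' x i h = (2 *\<^sub>R (\<Sum>k\<in>UNIV - {i}.
        ((V $ k $ k - 2 * V $ i $ k + V $ i $ i) * f' ((norm (x i - x k))\<^sup>2)) *\<^sub>R (x i - x k))) \<bullet> h" for h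
  proof -
    have "V \<bullet> DM f' x i h = (\<Sum>k\<in>UNIV. (V$k$k - 2 * V$i$k + V$i$i) * dd f' x i k h)"
      by (rule inner_DM[OF symV])
    also have "\<dots> = (\<Sum>k\<in>UNIV - {i}. (V$k$k - 2 * V$i$k + V$i$i) * dd f' x i k h)"
      by (rule sum.mono_neutral_right) (auto simp: dd_self)
    also have "\<dots> = (2 *\<^sub>R (\<Sum>k\<in>UNIV - {i}.
        ((V $ k $ k - 2 * V $ i $ k + V $ i $ i) * f' ((norm (x i - x k))\<^sup>2)) *\<^sub>R (x i - x k))) \<bullet> h"
      by (simp add: inner_sum_left sum_distrib_left dd_def algebra_simps)
    finally show ?thesis .
  qed
  have coef: "(let g = (\<lambda>e. \<Sum>j\<in>UNIV. (\<Sum>l\<in>UNIV. incidence e l * U $ l $ j)\<^sup>2 * gradJ $ j) in g {i, k})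
      = V $ k $ k - 2 * V $ i $ k + V $ i $ i" if "k \<in> UNIV - {i}" for k
  proof -
    have "k \<noteq> i" using that by simp
    hence "(let g = (\<lambda>e. \<Sum>j\<in>UNIV. (\<Sum>l\<in>UNIV. incidence e l * U $ l $ j)\<^sup>2 * gradJ $ j) in g {i, k})
        = (\<Sum>j\<in>UNIV. (U$i$j - U$k$j)^2 * gradJ $ j)" by (simp add: incidence_sum)
    also have "\<dots> = V $ k $ k - 2 * V $ i $ k + V $ i $ i"
    proof -
      have "\<And>j. (U$i$j - U$k$j)^2 * gradJ$j = (U$k$j * gradJ$j * U$k$j - 2 * (U$i$j * gradJ$j * U$k$j)) + U$i$j * gradJ$j * U$i$j"
        by (simp add: power2_eq_square algebra_simps)
      hence "(\<Sum>j\<in>UNIV. (U$i$j - U$k$j)^2 * gradJ $ j) = (\<Sum>j\<in>UNIV. U$k$j * gradJ$j * U$k$j)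
          - 2 * (\<Sum>j\<in>UNIV. U$i$j * gradJ$j * U$k$j) + (\<Sum>j\<in>UNIV. U$i$j * gradJ$j * U$i$j)"
        by (simp only: sum.distrib sum_subtractf sum_distrib_left)
      thus ?thesis unfolding V_def V_entry .
    qed
    finally show ?thesis .
  qed
  show ?thesis
  proof
    show "((\<lambda>y. J (sorted_eigenvalues (laplacian f (x(i := y))))) has_derivative
            (\<lambda>h. (2 *\<^sub>R (\<Sum>k\<in>UNIV - {i}.
               (let V = U ** diag_mat gradJ ** transpose U in
                  (V $ k $ k - 2 * V $ i $ k + V $ i $ i) * f' ((norm (x i - x k))\<^sup>2))
                 *\<^sub>R (x i - x k))) \<bullet> h)) (at (x i))"
      by (rule has_derivative_eq_rhs[OF comp]) (rule ext, unfold key, unfold Let_def V_def, rule refl)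
    show "((\<lambda>y. J (sorted_eigenvalues (laplacian f (x(i := y))))) has_derivative
            (\<lambda>h. (2 *\<^sub>R (\<Sum>k\<in>UNIV - {i}.
               (let g = (\<lambda>e. \<Sum>j\<in>UNIV. (\<Sum>l\<in>UNIV. incidence e l * U $ l $ j)\<^sup>2 * gradJ $ j) in
                  g {i, k} * f' ((norm (x i - x k))\<^sup>2))
                 *\<^sub>R (x i - x k))) \<bullet> h)) (at (x i))"
    proof -
      have "(\<Sum>k\<in>UNIV - {i}.
               (let g = (\<lambda>e. \<Sum>j\<in>UNIV. (\<Sum>l\<in>UNIV. incidence e l * U $ l $ j)\<^sup>2 * gradJ $ j) in
                  g {i, k} * f' ((norm (x i - x k))\<^sup>2)) *\<^sub>R (x i - x k))
          = (\<Sum>k\<in>UNIV - {i}. ((V $ k $ k - 2 * V $ i $ k + V $ i $ i) * f' ((norm (x i - x k))\<^sup>2)) *\<^sub>R (x i - x k))"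
      proof (rule sum.cong[OF refl])
        fix k assume k: "k \<in> UNIV - {i}"
        show "(let g = (\<lambda>e. \<Sum>j\<in>UNIV. (\<Sum>l\<in>UNIV. incidence e l * U $ l $ j)\<^sup>2 * gradJ $ j) in
                  g {i, k} * f' ((norm (x i - x k))\<^sup>2)) *\<^sub>R (x i - x k)
            = ((V $ k $ k - 2 * V $ i $ k + V $ i $ i) * f' ((norm (x i - x k))\<^sup>2)) *\<^sub>R (x i - x k)"
          using coef[OF k] by (simp add: Let_def)
      qed
      thus ?thesis by (intro has_derivative_eq_rhs[OF comp]) (rule ext, unfold key, simp only:)
    qed
  qed
qed


end
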